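(* Let $c\in\mathbb{R}^n$, and suppose $S(A,b)\neq\emptyset$. Let $e^*\in E$ be such that $\underline{X}(e^* )\in S(A,b)$ and $\underline{X}(e^* )$ minimizes $Z_1(x)=\sum_{j\in J}c^+_jx_j$ over $S(A,b)$, where $c^+_j=\max\{c_j,0\}$. Define $x^*\in[0,1]^n$ by $x^*_j=\bar X_j$ if $c_j<0$ and $x^*_j=\underline{X}(e^* )_j$ if $c_j\ge0$. Then $\sum_{j\in J}c_jx^*_j\le\sum_{j\in J}c_jx_j$ for every $x\in S(A,b)$.
   Context: Let $\lambda>0$. The Aczel–Alsina t-norm is $T^{\lambda}_{AA}:[0,1]^2\to[0,1]$, $T^{\lambda}_{AA}(a,x)=0$ if $a=0$ or $x=0$, and $T^{\lambda}_{AA}(a,x)=\exp\!\left(-\left[(-\ln a)^{\lambda}+(-\ln x)^{\lambda}\right]^{1/\lambda}\right)$ otherwise. Let $I=\{1,\dots,m\}$, $J=\{1,\dots,n\}$, $A=(a_{ij})$ with $a_{ij}\in[0,1]$, and $b=(b_i)_{i\in I}$ with $b_i\in[0,1]$. $S(A,b)=\{x\in[0,1]^n: \max_{j\in J} T^{\lambda}_{AA}(a_{ij},x_j)=b_i \text{ for all } i\in I\}$. For each $i\in I$, $J_i=\{j\in J: a_{ij}\ge b_i\}$. For $i\in I$ define $\hat x_i\in[0,1]^n$ by: for $k\in J_i$ with $b_i\neq 0$, $(\hat x_i)_k=\exp\!\left(-\left[(-\ln b_i)^{\lambda}-(-\ln a_{ik})^{\lambda}\right]^{1/\lambda}\right)$;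 for $k\in J_i$ with $a_{ik}>b_i=0$, $(\hat x_i)_k=0$; for $k\in J_i$ with $a_{ik}=b_i=0$, $(\hat x_i)_k=1$; for $k\notin J_i$, $(\hat x_i)_k=1$. Let $\bar X\in[0,1]^n$ be the componentwise minimum $\bar X_k=\min_{i\in I}(\hat x_i)_k$. For $i\in I$ and $j\in J_i$ define $\check x_i(j)\in[0,1]^n$ by $\check x_i(j)_k=\exp\!\left(-\left[(-\ln b_i)^{\lambda}-(-\ln a_{ij})^{\lambda}\right]^{1/\lambda}\right)$ if $b_i\neq0$ and $k=j$, and $\check x_i(j)_k=0$ otherwise. Let $E$ be the set of all maps $e:I\to J$ with $e(i)\in J_i$ for every $i\in I$. For $e\in E$ define $\underline{X}(e)\in[0,1]^n$ by $\underline{X}(e)_k=\max_{i\in I}\check x_i(e(i))_k$ for $k\in J$. *)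

theory Defs
  imports "HOL-Analysis.Analysis"
begin

definition T_AA :: "real \<Rightarrow> real \<Rightarrow> real \<Rightarrow> real" where
  "T_AA lam a x = (if a = 0 \<or> x = 0 then 0
     else exp (- (((- ln a) powr lam + (- ln x) powr lam) powr (1/lam))))"

text \<open>Index sets I = {1..m}, J = {1..n}; matrices/vectors are functions on nat.\<close>
definition Sol :: "real \<Rightarrow> nat \<Rightarrow> nat \<Rightarrow> (nat \<Rightarrow> nat \<Rightarrow> real) \<Rightarrow> (nat \<Rightarrow> real) \<Rightarrow> (nat \<Rightarrow> real) set" where
  "Sol lam m n A b = {x. (\<forall>j\<in>{1..n}. 0 \<le> x j \<and> x j \<le> 1) \<and>
      (\<forall>i\<in>{1..m}. Max ((\<lambda>j. T_AA lam (A i j) (x j)) ` {1..n}) = b i)}"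

definition Jset :: "nat \<Rightarrow> (nat \<Rightarrow> nat \<Rightarrow> real) \<Rightarrow> (nat \<Rightarrow> real) \<Rightarrow> nat \<Rightarrow> nat set" where
  "Jset n A b i = {j\<in>{1..n}. A i j \<ge> b i}"

definition phi :: "real \<Rightarrow> real \<Rightarrow> real \<Rightarrow> real" where
  "phi lam a bi = exp (- (((- ln bi) powr lam - (- ln a) powr lam) powr (1/lam)))"

definition xhat :: "real \<Rightarrow> nat \<Rightarrow> (nat \<Rightarrow> nat \<Rightarrow> real) \<Rightarrow> (nat \<Rightarrow> real) \<Rightarrow> nat \<Rightarrow> nat \<Rightarrow> real" where
  "xhat lam n A b i k =
     (if k \<in> Jset n A b i then
        (if b i \<noteq> 0 then phi lam (A i k) (b i)
         else if A i k > b i then 0 else 1)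
      else 1)"

definition Xbar :: "real \<Rightarrow> nat \<Rightarrow> nat \<Rightarrow> (nat \<Rightarrow> nat \<Rightarrow> real) \<Rightarrow> (nat \<Rightarrow> real) \<Rightarrow> nat \<Rightarrow> real" where
  "Xbar lam m n A b k = Min ((\<lambda>i. xhat lam n A b i k) ` {1..m})"

definition xcheck :: "real \<Rightarrow> (nat \<Rightarrow> nat \<Rightarrow> real) \<Rightarrow> (nat \<Rightarrow> real) \<Rightarrow> nat \<Rightarrow> nat \<Rightarrow> nat \<Rightarrow> real" where
  "xcheck lam A b i j k = (if b i \<noteq> 0 \<and> k = j then phi lam (A i j) (b i) else 0)"

definition Eset :: "nat \<Rightarrow> nat \<Rightarrow> (nat \<Rightarrow> nat \<Rightarrow> real) \<Rightarrow> (nat \<Rightarrow> real) \<Rightarrow> (nat \<Rightarrow> nat) set" where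
  "Eset m n A b = {e. \<forall>i\<in>{1..m}. e i \<in> Jset n A b i}"

definition Xlow :: "real \<Rightarrow> nat \<Rightarrow> (nat \<Rightarrow> nat \<Rightarrow> real) \<Rightarrow> (nat \<Rightarrow> real) \<Rightarrow> (nat \<Rightarrow> nat) \<Rightarrow> nat \<Rightarrow> real" where
  "Xlow lam m A b e k = Max ((\<lambda>i. xcheck lam A b i (e i) k) ` {1..m})"

end

theory Submission
  imports Defs
begin

lemma powr_inv_le:
  fixes s t lam :: real
  assumes "lam > 0" "s \<ge> 0" "t \<ge> 0" "s \<le> t powr (1/lam)"
  shows "s powr lam \<le> t"
proof -
  have "s powr lam \<le> (t powr (1/lam)) powr lam"
    using assms by (intro powr_mono2) auto
  also have "\<dots> = t"
    using assms by (cases "t = 0") (auto simp: powr_powr)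
  finally show ?thesis .
qed

lemma powr_inv_le2:
  fixes s t lam :: real
  assumes "lam > 0" "s \<ge> 0" "t \<ge> 0" "s \<le> t powr lam"
  shows "s powr (1/lam) \<le> t"
proof -
  have "s powr (1/lam) \<le> (t powr lam) powr (1/lam)"
    using assms by (intro powr_mono2) auto
  also have "\<dots> = t"
    using assms by (cases "t = 0") (auto simp: powr_powr)
  finally show ?thesis .
qed

lemma key:
  fixes lam a x bi :: real
  assumes lam: "lam > 0" and a: "0 < a" "a \<le> 1" and x: "0 < x" "x \<le> 1"
    and bb: "0 < bi" "bi \<le> a"
    and T: "exp (- (((- ln a) powr lam + (- ln x) powr lam) powr (1/lam))) \<le> bi"
  shows "x \<le> phi lam a bi"
proof -
  define u where "u = - ln a"
  define v where "v = - ln x"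
  define be where "be = - ln bi"
  have u0: "u \<ge> 0" using a by (simp add: u_def)
  have v0: "v \<ge> 0" using x by (simp add: v_def)
  have ub: "u \<le> be" using a bb by (simp add: u_def be_def)
  have b0: "be \<ge> 0" using u0 ub by linarith
  define S where "S = u powr lam + v powr lam"
  have S0: "S \<ge> 0" by (simp add: S_def)
  have "- (S powr (1/lam)) \<le> ln bi"
    using T bb unfolding S_def u_def v_def by (metis exp_le_cancel_iff exp_ln)
  hence "be \<le> S powr (1/lam)" by (simp add: be_def)
  hence "be powr lam \<le> S" using powr_inv_le[OF lam b0 S0] by simp
  hence D: "be powr lam - u powr lam \<le> v powr lam" by (simp add: S_def)
  have D0: "be powr lam - u powr lam \<ge> 0"
    using powr_mono2[of lam u be] lam u0 ub by simp
  have "(be powr lam - u powr lam) powr (1/lam) \<le> v"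
    by (rule powr_inv_le2[OF lam D0 v0 D])
  hence "exp (-v) \<le> exp (- ((be powr lam - u powr lam) powr (1/lam)))" by simp
  moreover have "exp (-v) = x" using x by (simp add: v_def)
  ultimately show ?thesis by (simp add: phi_def be_def u_def)
qed

lemma sol_le_Xbar:
  assumes lam: "lam > 0" and m: "m \<ge> 1" and n: "n \<ge> 1"
    and A: "\<forall>i\<in>{1..m}. \<forall>j\<in>{1..n}. 0 \<le> A i j \<and> A i j \<le> 1"
    and b: "\<forall>i\<in>{1..m}. 0 \<le> b i \<and> b i \<le> 1"
    and x: "x \<in> Sol lam m n A b" and k: "k \<in> {1..n}"
  shows "x k \<le> Xbar lam m n A b k"
  unfolding Xbar_def
proof (rule Min.boundedI)
  show "finite ((\<lambda>i. xhat lam n A b i k) ` {1..m})" by simp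
  show "(\<lambda>i. xhat lam n A b i k) ` {1..m} \<noteq> {}" using m by auto
  fix y assume "y \<in> (\<lambda>i. xhat lam n A b i k) ` {1..m}"
  then obtain i where i: "i \<in> {1..m}" and y: "y = xhat lam n A b i k" by auto
  have xk: "0 \<le> x k" "x k \<le> 1" using x k by (auto simp: Sol_def)
  have "Max ((\<lambda>j. T_AA lam (A i j) (x j)) ` {1..n}) = b i" using x i by (auto simp: Sol_def)
  moreover have "T_AA lam (A i k) (x k) \<le> Max ((\<lambda>j. T_AA lam (A i j) (x j)) ` {1..n})"
    using k by (intro Max_ge) auto
  ultimately have T: "T_AA lam (A i k) (x k) \<le> b i" by simp
  have Ai: "0 \<le> A i k" "A i k \<le> 1" using A i k by auto
  have bi: "0 \<le> b i" "b i \<le> 1" using b i by auto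
  show "x k \<le> y"
  proof (cases "k \<in> Jset n A b i")
    case False thus ?thesis using y xk by (simp add: xhat_def)
  next
    case True
    hence ab: "b i \<le> A i k" by (simp add: Jset_def)
    show ?thesis
    proof (cases "b i = 0")
      case True
      show ?thesis
      proof (cases "A i k > b i")
        case False thus ?thesis using y xk True \<open>k \<in> Jset n A b i\<close> by (simp add: xhat_def)
      next
        case gt: True
        have "x k = 0"
        proof (rule ccontr)
          assume "x k \<noteq> 0"
          hence "T_AA lam (A i k) (x k) > 0" using gt True by (simp add: T_AA_def)
          thus False using T True by simp
        qed
        thus ?thesis using y gt True \<open>k \<in> Jset n A b i\<close> by (simp add: xhat_def)
      qed
    next
      case bn: False
      have yv: "y = phi lam (A i k) (b i)" using y bn \<open>k \<in> Jset n A b i\<close> by (simp add: xhat_def)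
      show ?thesis
      proof (cases "x k = 0")
        case True thus ?thesis using yv by (simp add: phi_def)
      next
        case False
        have a0: "A i k \<noteq> 0" using ab bn bi by linarith
        have "x k \<le> phi lam (A i k) (b i)"
          apply (rule key[OF lam])
          using Ai a0 xk False bi bn ab T by (auto simp: T_AA_def)
        thus ?thesis using yv by simp
      qed
    qed
  qed
qed

theorem theorem2:
  fixes lam :: real and m n :: nat and A :: "nat \<Rightarrow> nat \<Rightarrow> real" and b c :: "nat \<Rightarrow> real"
    and e :: "nat \<Rightarrow> nat" and xs :: "nat \<Rightarrow> real"
  assumes lam: "lam > 0" and m: "m \<ge> 1" and n: "n \<ge> 1"
    and A: "\<forall>i\<in>{1..m}. \<forall>j\<in>{1..n}. 0 \<le> A i j \<and> A i j \<le> 1"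
    and b: "\<forall>i\<in>{1..m}. 0 \<le> b i \<and> b i \<le> 1"
    and nonempty: "Sol lam m n A b \<noteq> {}"
    and e: "e \<in> Eset m n A b"
    and esol: "Xlow lam m A b e \<in> Sol lam m n A b"
    and emin: "\<forall>x\<in>Sol lam m n A b.
       (\<Sum>j\<in>{1..n}. max (c j) 0 * Xlow lam m A b e j) \<le> (\<Sum>j\<in>{1..n}. max (c j) 0 * x j)"
    and xs: "\<forall>j\<in>{1..n}. xs j = (if c j < 0 then Xbar lam m n A b j else Xlow lam m A b e j)"
  shows "\<forall>x\<in>Sol lam m n A b. (\<Sum>j\<in>{1..n}. c j * xs j) \<le> (\<Sum>j\<in>{1..n}. c j * x j)"
proof
  fix x assume x: "x \<in> Sol lam m n A b"
  have s1: "(\<Sum>j\<in>{1..n}. c j * xs j) = (\<Sum>j\<in>{1..n}. max (c j) 0 * Xlow lam m A b e j)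
          + (\<Sum>j\<in>{1..n}. min (c j) 0 * Xbar lam m n A b j)"
    unfolding sum.distrib[symmetric] using xs by (intro sum.cong) auto
  have s2: "(\<Sum>j\<in>{1..n}. c j * x j) = (\<Sum>j\<in>{1..n}. max (c j) 0 * x j)
          + (\<Sum>j\<in>{1..n}. min (c j) 0 * x j)"
    unfolding sum.distrib[symmetric] by (intro sum.cong) (auto simp: max_def min_def algebra_simps)
  have "(\<Sum>j\<in>{1..n}. min (c j) 0 * Xbar lam m n A b j) \<le> (\<Sum>j\<in>{1..n}. min (c j) 0 * x j)"
  proof (rule sum_mono)
    fix j assume j: "j \<in> {1..n}"
    have "x j \<le> Xbar lam m n A b j" by (rule sol_le_Xbar[OF lam m n A b x j])
    thus "min (c j) 0 * Xbar lam m n A b j \<le> min (c j) 0 * x j"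
      by (intro mult_left_mono_neg) auto
  qed
  moreover have "(\<Sum>j\<in>{1..n}. max (c j) 0 * Xlow lam m A b e j) \<le> (\<Sum>j\<in>{1..n}. max (c j) 0 * x j)"
    using emin x by blast
  ultimately show "(\<Sum>j\<in>{1..n}. c j * xs j) \<le> (\<Sum>j\<in>{1..n}. c j * x j)"
    unfolding s1 s2 by (rule add_mono[OF _ _, rotated])
qed

end
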